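(* Let $F$ be a subfield of $\mathbb{R}$ and let $\sigma\subseteq\mathbb{R}^n$ be a $k$-dimensional $F$-simplex with one vertex $v_0$ at the origin. Then there is an orthogonal basis $U$ of $\mathbb{R}^n$ such that the squared length of each vector in $U$ lies in $F$ and all coordinates of all vertices of $\sigma$ with respect to $U$ lie in $F$.
   Context: A Euclidean simplex is an $F$-simplex if the square of the length of each of its edges ($1$-cells) lies in $F$. *)

theory Defs
  imports "HOL-Analysis.Analysis"
begin

definition real_subfield :: "real set \<Rightarrow> bool" where
  "real_subfield F \<longleftrightarrow> 0 \<in> F \<and> 1 \<in> F \<and>
     (\<forall>x\<in>F. \<forall>y\<in>F. x + y \<in> F \<and> x - y \<in> F \<and> x * y \<in> F) \<and>
     (\<forall>x\<in>F. x \<noteq> 0 \<longrightarrow> inverse x \<in> F)"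

definition simplex_vertices :: "'a::euclidean_space set \<Rightarrow> 'a set" where
  "simplex_vertices S = {v. v extreme_point_of S}"

definition F_simplex :: "real set \<Rightarrow> 'a::euclidean_space set \<Rightarrow> bool" where
  "F_simplex F S \<longleftrightarrow> (\<exists>k. k simplex S) \<and>
     (\<forall>x\<in>simplex_vertices S. \<forall>y\<in>simplex_vertices S. x \<noteq> y \<longrightarrow> (dist x y)\<^sup>2 \<in> F)"

end

theory Submission
  imports Defs
begin

lemma sf_add: "real_subfield F \<Longrightarrow> x \<in> F \<Longrightarrow> y \<in> F \<Longrightarrow> x + y \<in> F"
  unfolding real_subfield_def by blast
lemma sf_diff: "real_subfield F \<Longrightarrow> x \<in> F \<Longrightarrow> y \<in> F \<Longrightarrow> x - y \<in> F"
  unfolding real_subfield_def by blast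
lemma sf_mult: "real_subfield F \<Longrightarrow> x \<in> F \<Longrightarrow> y \<in> F \<Longrightarrow> x * y \<in> F"
  unfolding real_subfield_def by blast
lemma sf_0: "real_subfield F \<Longrightarrow> 0 \<in> F"
  unfolding real_subfield_def by blast
lemma sf_1: "real_subfield F \<Longrightarrow> 1 \<in> F"
  unfolding real_subfield_def by blast
lemma sf_divide: "real_subfield F \<Longrightarrow> x \<in> F \<Longrightarrow> y \<in> F \<Longrightarrow> x / y \<in> F"
proof -
  assume a: "real_subfield F" "x \<in> F" "y \<in> F"
  show ?thesis
  proof (cases "y = 0")
    case True then show ?thesis using a sf_0 by simp
  next
    case False
    then have "inverse y \<in> F" using a unfolding real_subfield_def by blast
    then show ?thesis using a sf_mult by (simp add: divide_inverse)
  qed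
qed
lemma sf_sum: "real_subfield F \<Longrightarrow> (\<And>x. x \<in> A \<Longrightarrow> f x \<in> F) \<Longrightarrow> sum f A \<in> F"
proof (induction A rule: infinite_finite_induct)
  case (infinite A) then show ?case using sf_0 by simp
next
  case empty then show ?case using sf_0 by simp
next
  case (insert x A) then show ?case using sf_add by simp
qed

lemma GS:
  fixes T :: "'a::euclidean_space set"
  assumes F: "real_subfield F" and fin: "finite S" and ST: "S \<subseteq> T"
    and TT: "\<forall>x\<in>T. \<forall>y\<in>T. inner x y \<in> F"
  shows "\<exists>B. finite B \<and> pairwise orthogonal B \<and> 0 \<notin> B \<and> (\<forall>b\<in>B. \<forall>t\<in>T. inner b t \<in> F)
     \<and> (\<forall>b\<in>B. inner b b \<in> F)
     \<and> (\<forall>s\<in>S. \<exists>c. s = (\<Sum>b\<in>B. c b *\<^sub>R b) \<and> (\<forall>b\<in>B. c b \<in> F))"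
  using fin ST
proof (induction S rule: finite_induct)
  case empty
  show ?case by (rule exI[of _ "{}"]) simp
next
  case (insert a S)
  then obtain B where fB: "finite B" and oB: "pairwise orthogonal B" and nB: "0 \<notin> B"
    and iB: "\<forall>b\<in>B. \<forall>t\<in>T. inner b t \<in> F" and sB: "\<forall>b\<in>B. inner b b \<in> F"
    and cB: "\<forall>s\<in>S. \<exists>c. s = (\<Sum>b\<in>B. c b *\<^sub>R b) \<and> (\<forall>b\<in>B. c b \<in> F)"
    by auto
  have aT: "a \<in> T" using insert by auto
  define d where "d b = inner b a / inner b b" for b
  define a' where "a' = a - (\<Sum>b\<in>B. d b *\<^sub>R b)"
  have dF: "d b \<in> F" if "b \<in> B" for b
    unfolding d_def using that iB sB aT sf_divide[OF F] by blast
  have orth: "orthogonal b a'" if "b \<in> B" for b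
    unfolding a'_def d_def using Gram_Schmidt_step[OF oB, of b a] that span_base by blast
  have ia't: "inner a' t \<in> F" if "t \<in> T" for t
  proof -
    have "inner a' t = inner a t - (\<Sum>b\<in>B. d b * inner b t)"
      unfolding a'_def by (simp add: inner_diff_left inner_sum_left)
    moreover have "(\<Sum>b\<in>B. d b * inner b t) \<in> F"
      by (rule sf_sum[OF F]) (use dF iB that sf_mult[OF F] in blast)
    ultimately show ?thesis using TT aT that sf_diff[OF F] by simp
  qed
  have ia'a': "inner a' a' \<in> F"
  proof -
    have "inner a' a' = inner a' a - (\<Sum>b\<in>B. d b * inner a' b)"
      by (subst (1) a'_def) (simp add: inner_diff_right inner_sum_right)
    also have "(\<Sum>b\<in>B. d b * inner a' b) = 0"
      using orth by (intro sum.neutral) (simp add: orthogonal_def inner_commute)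
    finally show ?thesis using ia't aT by simp
  qed
  have aeq: "a = a' + (\<Sum>b\<in>B. d b *\<^sub>R b)" unfolding a'_def by simp
  show ?case
  proof (cases "a' = 0")
    case True
    show ?thesis
      apply (rule exI[of _ B])
      using fB oB nB iB sB cB aeq True dF by auto
  next
    case False
    have a'B: "a' \<notin> B"
    proof
      assume "a' \<in> B"
      then have "a' \<bullet> a' = 0" using orth[of a'] by (simp add: orthogonal_def)
      then show False using False by simp
    qed
    show ?thesis
    proof (rule exI[of _ "insert a' B"], intro conjI ballI)
      show "finite (insert a' B)" using fB by simp
      show "pairwise orthogonal (insert a' B)"
        using oB orth by (auto simp: pairwise_orthogonal_insert orthogonal_commute)
      show "0 \<notin> insert a' B" using nB False by simp
      show "inner b t \<in> F" if "b \<in> insert a' B" "t \<in> T" for b t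
        using that iB ia't by auto
      show "inner b b \<in> F" if "b \<in> insert a' B" for b
        using that sB ia'a' by auto
      fix s assume "s \<in> insert a S"
      then consider "s = a" | "s \<in> S" by auto
      then show "\<exists>c. s = (\<Sum>b\<in>insert a' B. c b *\<^sub>R b) \<and> (\<forall>b\<in>insert a' B. c b \<in> F)"
      proof cases
        case 1
        define c where "c b = (if b = a' then 1 else d b)" for b
        have "(\<Sum>b\<in>insert a' B. c b *\<^sub>R b) = a' + (\<Sum>b\<in>B. c b *\<^sub>R b)"
          using fB a'B by (simp add: c_def)
        also have "(\<Sum>b\<in>B. c b *\<^sub>R b) = (\<Sum>b\<in>B. d b *\<^sub>R b)"
          using a'B by (intro sum.cong) (auto simp: c_def)
        finally show ?thesis using 1 aeq dF sf_1[OF F]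
          by (intro exI[of _ c]) (auto simp: c_def)
      next
        case 2
        then obtain c0 where c0: "s = (\<Sum>b\<in>B. c0 b *\<^sub>R b)" "\<forall>b\<in>B. c0 b \<in> F" using cB by blast
        define c where "c b = (if b = a' then 0 else c0 b)" for b
        have "(\<Sum>b\<in>insert a' B. c b *\<^sub>R b) = (\<Sum>b\<in>B. c b *\<^sub>R b)"
          using fB a'B by (simp add: c_def)
        also have "(\<Sum>b\<in>B. c b *\<^sub>R b) = (\<Sum>b\<in>B. c0 b *\<^sub>R b)"
          using a'B by (intro sum.cong) (auto simp: c_def)
        finally show ?thesis using c0 sf_0[OF F]
          by (intro exI[of _ c]) (auto simp: c_def)
      qed
    qed
  qed
qed

lemma sqnorm_F:
  assumes F: "real_subfield F" and FS: "F_simplex F \<sigma>" and z: "0 \<in> simplex_vertices \<sigma>"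
    and x: "x \<in> simplex_vertices \<sigma>" and y: "y \<in> simplex_vertices \<sigma>"
  shows "(norm (x - y))\<^sup>2 \<in> F"
proof (cases "x = y")
  case True then show ?thesis using sf_0[OF F] by simp
next
  case False
  then have "(dist x y)\<^sup>2 \<in> F" using FS x y unfolding F_simplex_def by blast
  then show ?thesis by (simp add: dist_norm)
qed

lemma inner_F:
  assumes F: "real_subfield F" and FS: "F_simplex F \<sigma>" and z: "0 \<in> simplex_vertices \<sigma>"
    and x: "x \<in> simplex_vertices \<sigma>" and y: "y \<in> simplex_vertices \<sigma>"
  shows "inner x y \<in> F"
proof -
  have nx: "(norm x)\<^sup>2 \<in> F" using sqnorm_F[OF F FS z x z] by simp
  have ny: "(norm y)\<^sup>2 \<in> F" using sqnorm_F[OF F FS z y z] by simp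
  have nxy: "(norm (x - y))\<^sup>2 \<in> F" using sqnorm_F[OF F FS z x y] .
  have eq: "inner x y = ((norm x)\<^sup>2 + (norm y)\<^sup>2 - (norm (x - y))\<^sup>2) / (1 + 1)"
    by (simp add: power2_norm_eq_inner inner_diff_left inner_diff_right inner_commute field_simps)
  show ?thesis unfolding eq
    by (intro sf_divide[OF F] sf_diff[OF F] sf_add[OF F] nx ny nxy sf_1[OF F])
qed

theorem lemma6p3:
  fixes F :: "real set" and \<sigma> :: "(real ^ 'n) set" and k :: int
  assumes "real_subfield F"
    and "k simplex \<sigma>"
    and "F_simplex F \<sigma>"
    and "0 \<in> simplex_vertices \<sigma>"
  shows "\<exists>U :: (real ^ 'n) set.
           independent U \<and> span U = UNIV \<and> pairwise orthogonal U \<and>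
           (\<forall>u\<in>U. (norm u)\<^sup>2 \<in> F) \<and>
           (\<forall>v\<in>simplex_vertices \<sigma>. \<exists>c :: real ^ 'n \<Rightarrow> real.
               v = (\<Sum>u\<in>U. c u *\<^sub>R u) \<and> (\<forall>u\<in>U. c u \<in> F))"
proof -
  note F = assms(1)
  define T where "T = simplex_vertices \<sigma>"
  obtain C where C: "finite C" "\<sigma> = convex hull C"
    using assms(2) unfolding simplex by blast
  have "T \<subseteq> C" unfolding T_def simplex_vertices_def C(2)
    using extreme_point_of_convex_hull by blast
  then have fT: "finite T" using C(1) finite_subset by blast
  have TT: "\<forall>x\<in>T. \<forall>y\<in>T. inner x y \<in> F"
    unfolding T_def using inner_F[OF F assms(3) assms(4)] by blast
  obtain B where fB: "finite B" and oB: "pairwise orthogonal B" and nB: "0 \<notin> B"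
    and sB: "\<forall>b\<in>B. inner b b \<in> F"
    and cB: "\<forall>s\<in>T. \<exists>c. s = (\<Sum>b\<in>B. c b *\<^sub>R b) \<and> (\<forall>b\<in>B. c b \<in> F)"
    using GS[OF F fT order_refl TT] by blast
  obtain U0 where U0: "U0 \<inter> (insert 0 B) = {}" "pairwise orthogonal (B \<union> U0)"
      "span (B \<union> U0) = span (B \<union> UNIV)"
    using orthogonal_extension_strong[OF oB] by blast
  obtain D where D: "D \<subseteq> span U0" "pairwise orthogonal D" "\<And>x. x \<in> D \<Longrightarrow> norm x = 1"
      "span D = span U0"
    using orthonormal_basis_subspace[OF subspace_span[of U0]] by metis
  have fD: "finite D" using D(2) pairwise_orthogonal_imp_finite by blast
  have bu: "orthogonal b u" if "b \<in> B" "u \<in> U0" for b u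
  proof -
    have "b \<noteq> u" using U0(1) that by blast
    then show ?thesis using U0(2) that unfolding pairwise_def by blast
  qed
  have bd: "orthogonal b d" if "b \<in> B" "d \<in> D" for b d
    using orthogonal_to_span[of d U0 b] D(1) bu that by blast
  have BD: "B \<inter> D = {}"
  proof (rule ccontr)
    assume "B \<inter> D \<noteq> {}"
    then obtain x where "x \<in> B" "x \<in> D" by blast
    then have "x \<bullet> x = 0" using bd by (simp add: orthogonal_def)
    then show False using D(3)[OF \<open>x \<in> D\<close>] by simp
  qed
  define U where "U = B \<union> D"
  have oU: "pairwise orthogonal U"
    unfolding U_def using oB D(2) bd
    unfolding pairwise_def by (metis Un_iff orthogonal_commute)
  have nU: "0 \<notin> U" unfolding U_def using nB D(3) by force
  have sU: "span U = UNIV"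
    unfolding U_def using U0(3) D(4) by (simp add: span_Un)
  show ?thesis
  proof (rule exI[of _ U], intro conjI ballI)
    show "independent U" using pairwise_orthogonal_independent[OF oU nU] .
    show "span U = UNIV" by (rule sU)
    show "pairwise orthogonal U" by (rule oU)
    show "(norm u)\<^sup>2 \<in> F" if "u \<in> U" for u
    proof (cases "u \<in> B")
      case True then show ?thesis using sB by (simp add: power2_norm_eq_inner)
    next
      case False then show ?thesis using that D(3) sf_1[OF F] unfolding U_def by auto
    qed
    fix v assume "v \<in> simplex_vertices \<sigma>"
    then obtain c0 where c0: "v = (\<Sum>b\<in>B. c0 b *\<^sub>R b)" "\<forall>b\<in>B. c0 b \<in> F"
      using cB unfolding T_def by blast
    define c where "c u = (if u \<in> B then c0 u else 0)" for u
    have "(\<Sum>u\<in>U. c u *\<^sub>R u) = (\<Sum>u\<in>B. c u *\<^sub>R u) + (\<Sum>u\<in>D. c u *\<^sub>R u)"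
      unfolding U_def using fB fD BD by (simp add: sum.union_disjoint)
    also have "(\<Sum>u\<in>D. c u *\<^sub>R u) = 0"
      using BD by (intro sum.neutral) (auto simp: c_def)
    also have "(\<Sum>u\<in>B. c u *\<^sub>R u) = v"
      unfolding c0 by (intro sum.cong) (auto simp: c_def)
    finally show "\<exists>c. v = (\<Sum>u\<in>U. c u *\<^sub>R u) \<and> (\<forall>u\<in>U. c u \<in> F)"
      using c0 sf_0[OF F] by (intro exI[of _ c]) (auto simp: c_def)
  qed
qed

end
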